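(* Let $q$ be a prime power and let $n$ be a positive integer coprime to $q$, written $n=2^mn'$ with $n'$ odd and $m\ge 0$. Let $r$ be the positive integer such that $2^r\,\|\,(q+1)$. Then $$|\Omega_{q^2,n}|=\begin{cases}2^m|\Omega_{q^2,n'}| & \text{if } 0\le m\le r,\\ 2^r|\Omega_{q^2,n'}| & \text{if } m>r.\end{cases}$$ In particular, $|\Omega_{q^2,1}|=1$ and $|\Omega_{q^2,2^m}|=2^m$ if $0\le m\le r$ and $|\Omega_{q^2,2^m}|=2^r$ if $m>r$.
   Context: $\mathbb{F}_{q^2}$ is the finite field with $q^2$ elements. For $\alpha\in\mathbb{F}_{q^2}$ put $\bar\alpha=\alpha^q$, and for $f(x)=\sum_i f_ix^i$ put $\overline{f(x)}=\sum_i \bar f_i x^i$. For $f(x)$ with $f(0)\neq 0$, $f^*(x)=x^{\deg f}f(0)^{-1}f(1/x)$ and $f^\dagger(x)=\overline{f^*(x)}$. A polynomial is SCRIM if it is monic, irreducible over $\mathbb{F}_{q^2}$, has nonzero constant term, and satisfies $f=f^\dagger$. $\Omega_{q^2,n}$ denotes the set of SCRIM polynomials in $\mathbb{F}_{q^2}[x]$ dividing $x^n-1$. For integers $s\ge 0$ and $i\ge1$, $2^s\|i$ means $2^s\mid i$ and $2^{s+1}\nmid i$. *)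

theory Defs
  imports "HOL-Computational_Algebra.Computational_Algebra"
begin

text \<open>Conjugation on coefficients: bar a = a^q (the field has q^2 elements).\<close>
definition conj_poly :: "nat \<Rightarrow> 'a::field poly \<Rightarrow> 'a poly" where
  "conj_poly q f = map_poly (\<lambda>a. a ^ q) f"

definition recip_poly :: "'a::field poly \<Rightarrow> 'a poly" where
  "recip_poly f = smult (inverse (coeff f 0)) (reflect_poly f)"

definition dagger_poly :: "nat \<Rightarrow> 'a::field poly \<Rightarrow> 'a poly" where
  "dagger_poly q f = conj_poly q (recip_poly f)"

definition SCRIM :: "nat \<Rightarrow> 'a::field poly \<Rightarrow> bool" where
  "SCRIM q f \<longleftrightarrow> lead_coeff f = 1 \<and> irreducible f \<and> coeff f 0 \<noteq> 0 \<and> f = dagger_poly q f"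

definition Omega :: "nat \<Rightarrow> nat \<Rightarrow> 'a::field poly set" where
  "Omega q n = {f. SCRIM q f \<and> f dvd (monom 1 n - 1)}"

end

theory Submission
  imports Defs "HOL-Algebra.Algebraic_Closure_Type" "HOL-Number_Theory.Residues"
begin

hide_const (open) Divisibility.prime Divisibility.irreducible Coset.order Polynomials.degree Polynomials.lead_coeff module.smult up_ring.coeff up_ring.monom


lemma hom0:
  fixes \<phi> :: "'a::comm_ring_1 \<Rightarrow> 'b::comm_ring_1"
  assumes add: "\<And>x y. \<phi> (x + y) = \<phi> x + \<phi> y"
  shows "\<phi> 0 = 0"
proof -
  have "\<phi> 0 = \<phi> 0 + \<phi> 0" using add[of 0 0] by simp
  thus ?thesis by simp
qed

lemma hom_map_poly_add:
  fixes \<phi> :: "'a::comm_ring_1 \<Rightarrow> 'b::comm_ring_1"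
  assumes add: "\<And>x y. \<phi> (x + y) = \<phi> x + \<phi> y"
  shows "map_poly \<phi> (p + q) = map_poly \<phi> p + map_poly \<phi> q"
  using hom0[OF add] by (intro poly_eqI) (simp add: coeff_map_poly add)

lemma hom_map_poly_mult:
  fixes \<phi> :: "'a::comm_ring_1 \<Rightarrow> 'b::comm_ring_1"
  assumes add: "\<And>x y. \<phi> (x + y) = \<phi> x + \<phi> y"
    and mult: "\<And>x y. \<phi> (x * y) = \<phi> x * \<phi> y"
  shows "map_poly \<phi> (p * q) = map_poly \<phi> p * map_poly \<phi> q"
proof (induction p)
  case 0
  then show ?case by simp
next
  case (pCons a p)
  have z: "\<phi> 0 = 0" by (rule hom0[OF add])
  have "map_poly \<phi> (pCons a p * q) = map_poly \<phi> (smult a q + pCons 0 (p * q))"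
    by (simp add: mult_pCons_left)
  also have "\<dots> = smult (\<phi> a) (map_poly \<phi> q) + pCons 0 (map_poly \<phi> p * map_poly \<phi> q)"
    by (simp add: hom_map_poly_add[OF add] map_poly_smult[where f=\<phi>, OF z mult] map_poly_pCons[where f=\<phi>, OF z] pCons.IH z)
  also have "\<dots> = map_poly \<phi> (pCons a p) * map_poly \<phi> q"
    by (simp add: map_poly_pCons[where f=\<phi>, OF z] mult_pCons_left)
  finally show ?case .
qed

lemma hom_map_poly_prod:
  fixes \<phi> :: "'a::comm_ring_1 \<Rightarrow> 'b::comm_ring_1"
  assumes add: "\<And>x y. \<phi> (x + y) = \<phi> x + \<phi> y"
    and mult: "\<And>x y. \<phi> (x * y) = \<phi> x * \<phi> y"
    and one: "\<phi> 1 = 1"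
  shows "map_poly \<phi> (\<Prod>i\<in>A. f i) = (\<Prod>i\<in>A. map_poly \<phi> (f i))"
proof (induction A rule: infinite_finite_induct)
  case (infinite A)
  then show ?case by (simp add: one)
next
  case empty
  then show ?case by (simp add: one)
next
  case (insert x F)
  then show ?case by (simp add: hom_map_poly_mult[OF add mult])
qed

lemma hom_uminus:
  fixes \<phi> :: "'a::comm_ring_1 \<Rightarrow> 'b::comm_ring_1"
  assumes add: "\<And>x y. \<phi> (x + y) = \<phi> x + \<phi> y"
  shows "\<phi> (- x) = - \<phi> x"
proof -
  have "\<phi> (-x) + \<phi> x = 0" using add[of "-x" x] hom0[OF add] by simp
  thus ?thesis by (simp add: eq_neg_iff_add_eq_0)
qed

lemma hom_map_poly_lin:
  fixes \<phi> :: "'a::comm_ring_1 \<Rightarrow> 'b::comm_ring_1"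
  assumes add: "\<And>x y. \<phi> (x + y) = \<phi> x + \<phi> y"
    and one: "\<phi> 1 = 1"
  shows "map_poly \<phi> [:-w, 1:] = [:-\<phi> w, 1:]"
  using hom0[OF add] by (simp add: map_poly_pCons hom_uminus[OF add] one)

lemma hom_poly:
  fixes \<phi> :: "'a::comm_ring_1 \<Rightarrow> 'b::comm_ring_1"
  assumes add: "\<And>x y. \<phi> (x + y) = \<phi> x + \<phi> y"
    and mult: "\<And>x y. \<phi> (x * y) = \<phi> x * \<phi> y"
  shows "poly (map_poly \<phi> p) (\<phi> x) = \<phi> (poly p x)"
proof (induction p)
  case 0
  then show ?case using hom0[OF add] by simp
next
  case (pCons a p)
  then show ?case using hom0[OF add] by (simp add: map_poly_pCons add mult)
qed

definition Lin :: "'a::comm_ring_1 set \<Rightarrow> 'a poly" where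
  "Lin S = (\<Prod>w\<in>S. [:-w, 1:])"

lemma poly_Lin: "poly (Lin S) x = (\<Prod>w\<in>S. x - w)"
  by (simp add: Lin_def poly_prod)

lemma Lin_root_iff:
  fixes S :: "'a::idom set"
  assumes "finite S"
  shows "poly (Lin S) x = 0 \<longleftrightarrow> x \<in> S"
  using assms by (simp add: poly_Lin prod_zero_iff)

lemma Lin_roots:
  fixes S :: "'a::idom set"
  assumes "finite S"
  shows "{x. poly (Lin S) x = 0} = S"
  using Lin_root_iff[OF assms] by auto

lemma Lin_monic: "lead_coeff (Lin S) = (1::'a::idom)"
  by (simp add: Lin_def lead_coeff_prod)

lemma Lin_nz: "Lin S \<noteq> (0::'a::idom poly)"
  using Lin_monic[of S] by auto

lemma degree_Lin:
  fixes S :: "'a::idom set"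
  assumes "finite S"
  shows "degree (Lin S) = card S"
  unfolding Lin_def using assms by (subst degree_prod_eq_sum_degree) auto

lemma Lin_subset_dvd:
  fixes S :: "'a::idom set"
  assumes "finite T" "S \<subseteq> T"
  shows "Lin S dvd Lin T"
proof -
  have "Lin T = Lin S * Lin (T - S)"
    unfolding Lin_def using prod.subset_diff[OF assms(2,1)] by (simp add: mult.commute)
  thus ?thesis by simp
qed

lemma Lin_map:
  fixes \<phi> :: "'a::comm_ring_1 \<Rightarrow> 'b::comm_ring_1"
  assumes add: "\<And>x y. \<phi> (x + y) = \<phi> x + \<phi> y"
    and mult: "\<And>x y. \<phi> (x * y) = \<phi> x * \<phi> y"
    and one: "\<phi> 1 = 1"
    and inj: "inj_on \<phi> S"
  shows "map_poly \<phi> (Lin S) = Lin (\<phi> ` S)"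
proof -
  have "map_poly \<phi> (Lin S) = (\<Prod>w\<in>S. [:-\<phi> w, 1:])"
    unfolding Lin_def by (simp add: hom_map_poly_prod[OF add mult one] hom_map_poly_lin[OF add one])
  also have "\<dots> = Lin (\<phi> ` S)"
    unfolding Lin_def by (simp add: prod.reindex[OF inj])
  finally show ?thesis .
qed


lemma order_le1_of_pderiv:
  fixes p :: "'a::field poly"
  assumes "p \<noteq> 0" "poly (pderiv p) z \<noteq> 0"
  shows "order z p \<le> 1"
proof (rule ccontr)
  assume "\<not> order z p \<le> 1"
  hence "[:-z, 1:] ^ 2 dvd p" using order_divides[of z 2 p] by auto
  then obtain g where g: "p = [:-z, 1:] ^ 2 * g" by (elim dvdE)
  define a where "a = [:-z, 1:]"
  have "pderiv p = a * (a * pderiv g + 2 * g * pderiv a)"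
    unfolding g a_def[symmetric] power2_eq_square pderiv_mult by (simp add: algebra_simps mult_2)
  moreover have "poly a z = 0" by (simp add: a_def)
  ultimately have "poly (pderiv p) z = 0" by simp
  with assms show False by simp
qed

lemma Lin_dvd_of_roots:
  fixes p :: "'a::idom poly"
  assumes "finite S" "\<And>w. w \<in> S \<Longrightarrow> poly p w = 0"
  shows "Lin S dvd p"
  using assms
proof (induction S rule: finite_induct)
  case empty
  then show ?case by (simp add: Lin_def)
next
  case (insert w S)
  then have "Lin S dvd p" by auto
  then obtain g where g: "p = Lin S * g" by (elim dvdE)
  have "poly (Lin S) w \<noteq> 0" using insert.hyps Lin_root_iff[of S w] by auto
  moreover have "poly p w = 0" using insert.prems by auto
  ultimately have "poly g w = 0" using g by simp
  then obtain h where h: "g = [:-w, 1:] * h" using poly_eq_0_iff_dvd[of g w] by (auto elim: dvdE)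
  have "Lin (insert w S) = [:-w, 1:] * Lin S" using insert.hyps by (simp add: Lin_def)
  have "p = Lin S * ([:-w, 1:] * h)" using g h by simp
  also have "\<dots> = ([:-w, 1:] * Lin S) * h" by (simp only: mult.assoc mult.left_commute)
  finally have "p = Lin (insert w S) * h" using \<open>Lin (insert w S) = [:-w, 1:] * Lin S\<close> by simp
  then show ?case by simp
qed

lemma split_lemma:
  fixes p :: "'a::alg_closed_field poly"
  assumes "p \<noteq> 0" "\<And>z. order z p \<le> 1"
  shows "p = smult (lead_coeff p) (Lin {z. poly p z = 0})"
proof -
  define S where "S = {z. poly p z = 0}"
  have fin: "finite S" unfolding S_def using poly_roots_finite[OF assms(1)] .
  have "Lin S dvd p" by (rule Lin_dvd_of_roots[OF fin]) (auto simp: S_def)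
  then obtain g where g: "p = Lin S * g" by (elim dvdE)
  have gnz: "g \<noteq> 0" using g assms(1) by auto
  have "degree g = 0"
  proof (rule ccontr)
    assume "degree g \<noteq> 0"
    then obtain w where w: "poly g w = 0" using alg_closed_imp_poly_has_root[of g] by auto
    hence "poly p w = 0" using g by simp
    hence "w \<in> S" by (simp add: S_def)
    hence "poly (Lin S) w = 0" using Lin_root_iff[OF fin] by simp
    hence "order w (Lin S) > 0" using order_gt_0_iff[OF Lin_nz[of S]] by auto
    moreover have "order w g > 0" using order_gt_0_iff[OF gnz] w by auto
    moreover have "order w p = order w (Lin S) + order w g"
      using g assms(1) by (simp add: order_mult)
    ultimately show False using assms(2)[of w] by simp
  qed
  then obtain c where c: "g = [:c:]" by (rule degree_eq_zeroE)
  have pc: "p = smult c (Lin S)" unfolding g c by simp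
  have "lead_coeff p = c" unfolding pc lead_coeff_smult Lin_monic by simp
  hence "p = smult (lead_coeff p) (Lin S)" using pc by (simp only:)
  thus ?thesis unfolding S_def .
qed

definition mu :: "nat \<Rightarrow> 'a::field set" where
  "mu N = {z. z ^ N = 1}"

lemma poly_xN: "poly (monom 1 N - 1 :: 'a::comm_ring_1 poly) z = z ^ N - 1"
  by (simp add: poly_monom)


lemma xN_degree:
  assumes "0 < N" shows "degree (monom 1 N - 1 :: 'a::field poly) = N"
proof (rule antisym)
  show "degree (monom 1 N - 1 :: 'a::field poly) \<le> N"
    by (rule degree_diff_le) (auto simp: degree_monom_eq)
  have "coeff (monom 1 N - 1 :: 'a::field poly) N \<noteq> 0" using assms by simp
  thus "N \<le> degree (monom 1 N - 1 :: 'a::field poly)" by (rule le_degree)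
qed

lemma xN_nz: "0 < N \<Longrightarrow> (monom 1 N - 1 :: 'a::field poly) \<noteq> 0"
  using xN_degree[of N, where 'a='a] by auto

lemma xN_lead: "0 < N \<Longrightarrow> lead_coeff (monom 1 N - 1 :: 'a::field poly) = 1"
  by (simp add: xN_degree)

lemma xN_order:
  fixes z :: "'a::field"
  assumes "0 < N" "of_nat N \<noteq> (0::'a)"
  shows "order z (monom 1 N - 1) \<le> 1"
proof (cases "z ^ N = 1")
  case True
  hence "z \<noteq> 0" using assms(1) by (auto simp: power_0_left)
  have "poly (pderiv (monom 1 N - 1 :: 'a poly)) z = of_nat N * z ^ (N - 1)"
    by (simp add: pderiv_diff pderiv_monom poly_monom)
  also have "\<dots> \<noteq> 0" using assms \<open>z \<noteq> 0\<close> by simp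
  finally show ?thesis by (intro order_le1_of_pderiv xN_nz assms)
next
  case False
  hence "poly (monom 1 N - 1 :: 'a poly) z \<noteq> 0" by (simp add: poly_monom)
  then show ?thesis by (simp add: order_0I)
qed

lemma xN_Lin:
  assumes "0 < N" "of_nat N \<noteq> (0::'a::alg_closed_field)"
  shows "(monom 1 N - 1 :: 'a poly) = Lin (mu N)"
proof -
  have "(monom 1 N - 1 :: 'a poly) = smult (lead_coeff (monom 1 N - 1 :: 'a poly)) (Lin {z. poly (monom 1 N - 1 :: 'a poly) z = 0})"
    by (rule split_lemma) (use xN_nz xN_order assms in auto)
  also have "{z. poly (monom 1 N - 1 :: 'a poly) z = 0} = mu N"
    by (simp add: poly_monom mu_def)
  also have "lead_coeff (monom 1 N - 1 :: 'a poly) = 1" by (rule xN_lead[OF assms(1)])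
  finally show ?thesis by simp
qed

lemma finite_mu: "0 < N \<Longrightarrow> finite (mu N :: 'a::field set)"
proof -
  assume N: "0 < N"
  have "mu N = {z::'a. poly (monom 1 N - 1) z = 0}" by (simp add: poly_monom mu_def)
  thus ?thesis using poly_roots_finite[OF xN_nz[OF N]] by simp
qed

lemma card_mu:
  assumes "0 < N" "of_nat N \<noteq> (0::'a::alg_closed_field)"
  shows "card (mu N :: 'a set) = N"
proof -
  have "N = degree (monom 1 N - 1 :: 'a poly)" by (rule xN_degree[OF assms(1), symmetric])
  also have "\<dots> = degree (Lin (mu N :: 'a set))" using xN_Lin[OF assms] by simp
  also have "\<dots> = card (mu N :: 'a set)" by (rule degree_Lin[OF finite_mu[OF assms(1)]])
  finally show ?thesis by simp
qed



lemma ff_power_card: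
  fixes x :: "'a::{finite,field}"
  shows "x ^ card (UNIV :: 'a set) = x"
proof (cases "x = 0")
  case False
  have "x * (\<Prod>y\<in>UNIV-{0}. x * y) = x * x ^ (card (UNIV :: 'a set) - 1) * \<Prod>(UNIV-{0})"
    by (simp add: prod.distrib mult_ac)
  also have "x * x ^ (card (UNIV :: 'a set) - 1) = x ^ Suc (card (UNIV :: 'a set) - 1)"
    by (subst power_Suc) auto
  also have "Suc (card (UNIV :: 'a set) - 1) = card (UNIV :: 'a set)"
    using finite_UNIV_card_ge_0[where ?'a = 'a] by simp
  also have "(\<Prod>y\<in>UNIV-{0}. x * y) = (\<Prod>y\<in>UNIV-{0}. y)"
    by (rule prod.reindex_bij_witness[of _ "\<lambda>y. y / x" "\<lambda>y. x * y"]) (use False in auto)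
  finally show ?thesis
    by simp
qed (use finite_UNIV_card_ge_0[where ?'a = 'a] in auto)

lemma frob_add:
  fixes x y :: "'b::comm_ring_1"
  assumes "CHAR('b) = p" "prime p"
  shows "(x + y) ^ (p ^ j) = x ^ (p ^ j) + y ^ (p ^ j)"
  using freshmans_dream'[of "p ^ j" j x y] assms by simp

lemma frob_diff:
  fixes x y :: "'b::comm_ring_1"
  assumes "CHAR('b) = p" "prime p"
  shows "(x - y) ^ (p ^ j) = x ^ (p ^ j) - y ^ (p ^ j)"
proof -
  have "((x - y) + y) ^ (p ^ j) = (x - y) ^ (p ^ j) + y ^ (p ^ j)" by (rule frob_add[OF assms])
  thus ?thesis by (simp add: algebra_simps)
qed

lemma frob_inj:
  fixes x y :: "'b::field"
  assumes "CHAR('b) = p" "prime p" "x ^ (p ^ j) = y ^ (p ^ j)"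
  shows "x = y"
proof -
  have "(x - y) ^ (p ^ j) = 0" using frob_diff[OF assms(1,2)] assms(3) by simp
  thus ?thesis by simp
qed

locale ffq =
  fixes q :: nat and p :: nat and k :: nat and TY :: "'a::{finite,field} itself"
  assumes card_F: "card (UNIV :: 'a set) = q ^ 2"
    and p_prime: "prime p" and k_pos: "0 < k" and q_def: "q = p ^ k" and q_odd: "odd q"
begin

lemma charF: "CHAR('a) = p"
proof -
  have fin: "finite (UNIV :: 'a set)" by simp
  have cp: "prime CHAR('a)"
    using prime_CHAR_semidom[where ?'a = 'a] finite_imp_CHAR_pos[OF fin] by blast
  have "CHAR('a) dvd p ^ (2 * k)" using CHAR_dvd_CARD[where ?'a='a] card_F q_def
    by (simp add: power_mult mult.commute)
  hence "CHAR('a) dvd p" using prime_dvd_power[OF cp] by blast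
  thus ?thesis using cp p_prime primes_dvd_imp_eq by blast
qed

lemma charK: "CHAR('a alg_closure) = p"
  using charF by simp

lemma Q_eq: "q ^ 2 = p ^ (2 * k)"
  by (simp add: q_def power_mult[symmetric] mult.commute)

lemma powQ_F: "(x :: 'a) ^ (q ^ 2) = x"
  using ff_power_card[of x] card_F by simp

lemma powQ_toac: "(to_ac (x :: 'a)) ^ (q ^ 2) = to_ac x"
  by (metis powQ_F to_ac_power)

lemma frobq_add: "(x + y :: 'a alg_closure) ^ q = x ^ q + y ^ q"
  unfolding q_def by (rule frob_add[OF charK p_prime])

lemma frobQ_add: "(x + y :: 'a alg_closure) ^ (q ^ 2) = x ^ (q ^ 2) + y ^ (q ^ 2)"
  unfolding Q_eq by (rule frob_add[OF charK p_prime])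

lemma frobq_inj: "(x :: 'a alg_closure) ^ q = y ^ q \<Longrightarrow> x = y"
  unfolding q_def by (rule frob_inj[OF charK p_prime])

lemma frobQ_inj: "(x :: 'a alg_closure) ^ (q ^ 2) = y ^ (q ^ 2) \<Longrightarrow> x = y"
  unfolding Q_eq by (rule frob_inj[OF charK p_prime])

lemma q_ge: "q \<ge> 2"
proof -
  have "p \<ge> 2" using p_prime prime_ge_2_nat by blast
  hence "p ^ k \<ge> 2 ^ k" by (simp add: power_mono)
  moreover have "(2::nat) ^ k \<ge> 2" using k_pos by (cases k) auto
  ultimately show ?thesis using q_def by simp
qed

lemma q_pos: "q > 0" using q_ge by simp

lemma fixed_in_range:
  assumes "(y :: 'a alg_closure) ^ (q ^ 2) = y"
  shows "y \<in> range to_ac"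
proof -
  define Q where "Q = q ^ 2"
  have "q * q \<ge> 2 * 2" by (rule mult_le_mono[OF q_ge q_ge])
  hence Q1: "Q > 1" unfolding Q_def by (simp add: power2_eq_square)
  define P :: "'a alg_closure poly" where "P = monom 1 Q - monom 1 1"
  have degP: "degree P = Q"
  proof (rule antisym)
    show "degree P \<le> Q" unfolding P_def by (rule degree_diff_le) (use Q1 in \<open>auto simp: degree_monom_eq\<close>)
    have "coeff P Q \<noteq> 0" unfolding P_def using Q1 by simp
    thus "Q \<le> degree P" by (rule le_degree)
  qed
  hence Pnz: "P \<noteq> 0" using Q1 by auto
  define R where "R = {y :: 'a alg_closure. poly P y = 0}"
  have R_eq: "R = {y. y ^ Q = y}" unfolding R_def P_def by (auto simp: poly_monom)
  have finR: "finite R" unfolding R_def by (rule poly_roots_finite[OF Pnz])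
  have cardR: "card R \<le> Q" unfolding R_def using card_poly_roots_bound[OF Pnz] degP by simp
  have sub: "range to_ac \<subseteq> R" unfolding R_eq Q_def using powQ_toac by auto
  have "card (range (to_ac :: 'a \<Rightarrow> 'a alg_closure)) = Q"
    using card_image[OF inj_to_ac[where ?'a='a]] card_F Q_def by simp
  moreover have "card (range (to_ac :: 'a \<Rightarrow> 'a alg_closure)) \<le> card R" by (rule card_mono[OF finR sub])
  ultimately have "card (range (to_ac :: 'a \<Rightarrow> 'a alg_closure)) = card R" using cardR by simp
  hence "range to_ac = R" by (rule card_subset_eq[OF finR sub])
  thus ?thesis using assms R_eq Q_def by auto
qed

abbreviation mK :: "'a poly \<Rightarrow> 'a alg_closure poly" where
  "mK f \<equiv> map_poly to_ac f"

lemma mK_add: "mK (f + g) = mK f + mK g"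
  by (rule hom_map_poly_add) simp

lemma mK_mult: "mK (f * g) = mK f * mK g"
  by (rule hom_map_poly_mult) simp_all

lemma mK_diff: "mK (f - g) = mK f - mK g"
  by (intro poly_eqI) (simp add: coeff_map_poly)

lemma mK_inj: "mK f = mK g \<Longrightarrow> f = g"
  by (intro poly_eqI) (metis coeff_map_poly to_ac_0 to_ac_eq_iff)

lemma degree_mK: "degree (mK f) = degree f"
  by (rule degree_map_poly) simp

lemma coeff_mK: "coeff (mK f) i = to_ac (coeff f i)"
  by (simp add: coeff_map_poly)

lemma lead_mK: "lead_coeff (mK f) = to_ac (lead_coeff f)"
  by (simp add: degree_mK coeff_mK)

lemma mK_eq0: "mK f = 0 \<longleftrightarrow> f = 0"
  using mK_inj[of f 0] by auto

lemma mK_xN: "mK (monom 1 N - 1) = monom 1 N - 1"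
  by (simp add: mK_diff map_poly_monom)

lemma mK_dvd:
  assumes "mK a dvd mK b"
  shows "a dvd b"
proof (cases "a = 0")
  case True
  then have "mK b = 0" using assms by simp
  then have "b = 0" using mK_eq0 by simp
  then show ?thesis by simp
next
  case False
  have b: "b = a * (b div a) + b mod a" by simp
  hence "mK b = mK a * mK (b div a) + mK (b mod a)"
    by (metis mK_add mK_mult)
  hence "mK a dvd mK (b mod a)" using assms by (metis dvd_add_right_iff dvd_triv_left)
  moreover have "degree (b mod a) < degree a \<or> b mod a = 0"
    using degree_mod_less'[of a b] False by (cases "b mod a = 0") auto
  ultimately have "b mod a = 0"
  proof (elim disjE)
    assume d: "degree (b mod a) < degree a" and dv: "mK a dvd mK (b mod a)"
    show "b mod a = 0"
    proof (rule ccontr)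
      assume "b mod a \<noteq> 0"
      hence "mK (b mod a) \<noteq> 0" using mK_eq0 by simp
      hence "degree (mK a) \<le> degree (mK (b mod a))" by (rule dvd_imp_degree_le[OF dv])
      thus False using d by (simp add: degree_mK)
    qed
  qed
  thus ?thesis by (simp add: mod_eq_0_iff_dvd)
qed

lemma mK_fixQ: "map_poly (\<lambda>y. y ^ (q ^ 2)) (mK f) = mK f"
  by (subst map_poly_map_poly) (auto simp: o_def powQ_toac q_pos)

lemma root_powQ:
  assumes "poly (mK f) z = 0"
  shows "poly (mK f) (z ^ (q ^ 2)) = 0"
proof -
  have "poly (map_poly (\<lambda>y. y ^ (q ^ 2)) (mK f)) (z ^ (q ^ 2)) = (poly (mK f) z) ^ (q ^ 2)"
    by (rule hom_poly) (simp_all add: frobQ_add power_mult_distrib)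
  thus ?thesis using assms mK_fixQ q_pos by simp
qed

lemma descend_Lin:
  assumes fin: "finite S" and cl: "\<And>y. y \<in> S \<Longrightarrow> y ^ (q ^ 2) \<in> S"
  shows "\<exists>h. mK h = Lin S"
proof -
  let ?F = "\<lambda>y :: 'a alg_closure. y ^ (q ^ 2)"
  have inj: "inj_on ?F S" by (auto intro: inj_onI frobQ_inj)
  have sub: "?F ` S \<subseteq> S" using cl by auto
  have "card (?F ` S) = card S" by (rule card_image[OF inj])
  hence img: "?F ` S = S" using card_subset_eq[OF fin sub] by simp
  have "map_poly ?F (Lin S) = Lin (?F ` S)"
    by (rule Lin_map) (simp_all add: frobQ_add power_mult_distrib inj)
  hence fixL: "map_poly ?F (Lin S) = Lin S" using img by simp
  have inr: "coeff (Lin S) i \<in> range to_ac" for i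
  proof -
    have "coeff (map_poly ?F (Lin S)) i = (coeff (Lin S) i) ^ (q ^ 2)"
      by (subst coeff_map_poly) (use q_pos in auto)
    hence "(coeff (Lin S) i) ^ (q ^ 2) = coeff (Lin S) i" using fixL by simp
    thus ?thesis by (rule fixed_in_range)
  qed
  define h where "h = map_poly of_ac (Lin S)"
  have "mK h = Lin S"
    unfolding h_def by (intro poly_eqI) (simp add: coeff_map_poly to_ac_of_ac[OF inr])
  thus ?thesis by blast
qed

end



definition orb :: "nat \<Rightarrow> 'a::field \<Rightarrow> 'a set" where
  "orb Q z = {z ^ (Q ^ i) | i. True}"

definition good :: "nat \<Rightarrow> 'a::field \<Rightarrow> bool" where
  "good q z \<longleftrightarrow> (inverse z) ^ q \<in> orb (q ^ 2) z"

lemma pow_pow: "((z::'a::comm_semiring_1) ^ (Q ^ a)) ^ (Q ^ b) = z ^ (Q ^ (a + b))"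
  by (simp add: power_mult[symmetric] power_add)

lemma orb_self: "z \<in> orb Q z"
  unfolding orb_def by (auto intro: exI[of _ 0])

lemma orb_closed:
  assumes "w \<in> orb Q z" shows "w ^ Q \<in> orb Q z"
proof -
  obtain i where "w = z ^ (Q ^ i)" using assms unfolding orb_def by auto
  hence "w ^ Q = z ^ (Q ^ Suc i)" by (simp add: power_mult[symmetric] mult.commute)
  thus ?thesis unfolding orb_def by blast
qed

lemma orb_mu: "z \<in> mu n \<Longrightarrow> orb Q z \<subseteq> mu n"
  unfolding orb_def mu_def by (auto simp: power_mult[symmetric] mult.commute[of _ n] power_mult)

lemma orb_finite: "0 < n \<Longrightarrow> z \<in> mu n \<Longrightarrow> finite (orb Q z)"
  using finite_subset[OF orb_mu finite_mu] by blast

lemma smult_prod_poly: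
  "smult (\<Prod>i\<in>A. c i) (\<Prod>i\<in>A. f i) = (\<Prod>i\<in>A. smult (c i) (f i :: 'a::comm_ring_1 poly))"
proof (induction A rule: infinite_finite_induct)
  case (insert x F)
  have e: "smult (a * b) (u * v) = smult a u * smult b v" for a b and u v :: "'a poly"
    by (simp add: mult_smult_left mult_smult_right mult.commute)
  from insert show ?case by (simp add: e)
qed auto

lemma reflect_lin: "reflect_poly [:-w, 1:] = [:1, -(w::'a::comm_ring_1):]"
  by (intro poly_eqI) (auto simp: coeff_reflect_poly coeff_pCons split: nat.splits)

lemma recip_Lin:
  fixes S :: "'a::field set"
  assumes fin: "finite S" and nz: "0 \<notin> S"
  shows "recip_poly (Lin S) = Lin (inverse ` S)"
proof -
  have c0: "coeff (Lin S) 0 = (\<Prod>w\<in>S. - w)"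
    by (simp add: poly_0_coeff_0[symmetric] poly_Lin)
  have "recip_poly (Lin S) = smult (\<Prod>w\<in>S. inverse (- w)) (\<Prod>w\<in>S. [:1, -w:])"
  proof -
    have "inverse (\<Prod>w\<in>S. - w) = (\<Prod>w\<in>S. inverse (- w))"
      by (induction S rule: infinite_finite_induct) simp_all
    thus ?thesis by (simp only: recip_poly_def c0) (simp add: Lin_def reflect_poly_prod reflect_lin)
  qed
  also have "\<dots> = (\<Prod>w\<in>S. smult (inverse (- w)) [:1, -w:])" by (rule smult_prod_poly)
  also have "\<dots> = (\<Prod>w\<in>S. [:- inverse w, 1:])"
    by (rule prod.cong) (use nz in \<open>auto simp: field_simps\<close>)
  also have "\<dots> = Lin (inverse ` S)"
    unfolding Lin_def by (subst prod.reindex) (auto intro: inj_onI)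
  finally show ?thesis .
qed

context ffq
begin

definition Zr :: "'a poly \<Rightarrow> 'a alg_closure set" where
  "Zr f = {z. poly (mK f) z = 0}"

definition sig :: "'a alg_closure \<Rightarrow> 'a alg_closure" where
  "sig y = (inverse y) ^ q"

lemma good_sig: "good q z \<longleftrightarrow> sig z \<in> orb (q^2) z"
  by (simp add: good_def sig_def)

lemma powQ_iter_inj: "(x :: 'a alg_closure) ^ ((q^2) ^ i) = y ^ ((q^2) ^ i) \<Longrightarrow> x = y"
proof (induction i arbitrary: x y)
  case 0
  then show ?case by simp
next
  case (Suc i)
  have "(x ^ ((q^2) ^ i)) ^ (q^2) = (y ^ ((q^2) ^ i)) ^ (q^2)"
    using Suc.prems by (simp add: power_mult[symmetric] mult.commute)
  hence "x ^ ((q^2) ^ i) = y ^ ((q^2) ^ i)" by (rule frobQ_inj)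
  thus ?case by (rule Suc.IH)
qed

lemma orb_period:
  assumes n: "0 < n" and z: "z \<in> (mu n :: 'a alg_closure set)"
  shows "\<exists>N>0. z ^ ((q^2) ^ N) = z"
proof -
  let ?f = "\<lambda>i::nat. z ^ ((q^2) ^ i)"
  have "range ?f \<subseteq> orb (q^2) z" unfolding orb_def by auto
  hence "finite (range ?f)" using orb_finite[OF n z] finite_subset by blast
  hence "\<not> inj ?f" using finite_imageD infinite_UNIV_nat by blast
  then obtain i j where ij: "i \<noteq> j" "?f i = ?f j" unfolding inj_on_def by blast
  have key: "\<exists>N>0. z ^ ((q^2) ^ N) = z" if "i < j" "?f i = ?f j" for i j
  proof -
    have "z ^ ((q^2) ^ i) = (z ^ ((q^2) ^ (j - i))) ^ ((q^2) ^ i)"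
      using that by (simp add: pow_pow)
    hence "z = z ^ ((q^2) ^ (j - i))" by (rule powQ_iter_inj)
    thus ?thesis using \<open>i < j\<close> by (intro exI[of _ "j - i"]) auto
  qed
  show ?thesis
  proof (cases "i < j")
    case True
    then show ?thesis using key ij by blast
  next
    case False
    hence "j < i" using ij(1) by simp
    then show ?thesis using key ij(2) by metis
  qed
qed

lemma orb_eq:
  assumes n: "0 < n" and z: "z \<in> (mu n :: 'a alg_closure set)" and w: "w \<in> orb (q^2) z"
  shows "orb (q^2) w = orb (q^2) z"
proof
  obtain i where wi: "w = z ^ ((q^2) ^ i)" using w unfolding orb_def by auto
  show "orb (q^2) w \<subseteq> orb (q^2) z"
    unfolding orb_def wi pow_pow by auto
  obtain N where N: "N > 0" "z ^ ((q^2) ^ N) = z" using orb_period[OF n z] by blast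
  have per: "z ^ ((q^2) ^ (N * t)) = z" for t
  proof (induction t)
    case (Suc t)
    have "z ^ ((q^2) ^ (N * Suc t)) = (z ^ ((q^2) ^ N)) ^ ((q^2) ^ (N * t))"
      by (simp add: pow_pow)
    then show ?case using N Suc by simp
  qed simp
  show "orb (q^2) z \<subseteq> orb (q^2) w"
  proof
    fix x assume "x \<in> orb (q^2) z"
    then obtain j where xj: "x = z ^ ((q^2) ^ j)" unfolding orb_def by auto
    have "1 * (i + 1) \<le> N * (i + 1)" using N by (intro mult_le_mono1) simp
    hence le: "i \<le> N * (i + 1)" by simp
    have "w ^ ((q^2) ^ (N * (i + 1) - i + j)) = z ^ ((q^2) ^ (N * (i + 1) + j))"
      unfolding wi pow_pow using le by simp
    also have "\<dots> = (z ^ ((q^2) ^ (N * (i + 1)))) ^ ((q^2) ^ j)" by (simp only: pow_pow)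
    also have "\<dots> = x" unfolding xj per ..
    finally show "x \<in> orb (q^2) w" unfolding orb_def by (auto intro!: exI[of _ "N * (i + 1) - i + j"])
  qed
qed

lemma orb_roots:
  assumes "poly (mK f) w = 0"
  shows "orb (q^2) w \<subseteq> Zr f"
proof
  fix x assume "x \<in> orb (q^2) w"
  then obtain i where xi: "x = w ^ ((q^2) ^ i)" unfolding orb_def by auto
  have "poly (mK f) (w ^ ((q^2) ^ i)) = 0" for i
  proof (induction i)
    case (Suc i)
    have "w ^ ((q^2) ^ Suc i) = (w ^ ((q^2) ^ i)) ^ (q^2)" using pow_pow[of w "q^2" i 1] by simp
    then show ?case using root_powQ[OF Suc] by simp
  qed (use assms in simp)
  thus "x \<in> Zr f" unfolding Zr_def xi by simp
qed

lemma unit_no_root: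
  assumes "is_unit g"
  shows "poly (mK g) x \<noteq> 0"
proof -
  obtain g' where "1 = g * g'" using assms by (elim dvdE)
  hence "mK 1 = mK g * mK g'" by (metis mK_mult)
  hence "poly (mK g) x * poly (mK g') x = 1" by (metis map_poly_1' poly_1 poly_mult to_ac_1)
  thus ?thesis by auto
qed

lemma dagger_mK: "mK (dagger_poly q f) = map_poly (\<lambda>y. y ^ q) (recip_poly (mK f))"
proof -
  have r: "mK (reflect_poly f) = reflect_poly (mK f)"
    by (intro poly_eqI) (simp add: coeff_reflect_poly coeff_mK degree_mK)
  have rc: "mK (recip_poly f) = recip_poly (mK f)"
    unfolding recip_poly_def by (simp add: map_poly_smult r coeff_mK)
  have a: "mK (map_poly (\<lambda>a. a ^ q) g) = map_poly (to_ac \<circ> (\<lambda>a. a ^ q)) g" for g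
    by (rule map_poly_map_poly) (simp_all add: q_pos)
  have b: "map_poly (\<lambda>y. y ^ q) (mK g) = map_poly ((\<lambda>y. y ^ q) \<circ> to_ac) g" for g
    by (rule map_poly_map_poly) (simp_all add: q_pos)
  have c: "to_ac \<circ> (\<lambda>a. a ^ q) = (\<lambda>y. y ^ q) \<circ> (to_ac :: 'a \<Rightarrow> _)" by (simp add: o_def)
  show ?thesis
    unfolding dagger_poly_def conj_poly_def rc[symmetric] a b c ..
qed

lemma dagger_Lin:
  assumes fin: "finite S" and nz: "0 \<notin> S"
  shows "map_poly (\<lambda>y. y ^ q) (recip_poly (Lin S)) = Lin (sig ` (S :: 'a alg_closure set))"
proof -
  have "map_poly (\<lambda>y. y ^ q) (recip_poly (Lin S)) = Lin ((\<lambda>y. y ^ q) ` inverse ` S)"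
    unfolding recip_Lin[OF fin nz]
  proof (rule Lin_map)
    show "inj_on (\<lambda>y. y ^ q) (inverse ` S)" by (rule inj_onI) (erule frobq_inj)
  qed (simp_all add: frobq_add power_mult_distrib)
  also have "(\<lambda>y. y ^ q) ` inverse ` S = sig ` S" unfolding sig_def by (simp add: image_image)
  finally show ?thesis .
qed

end



context ffq
begin

lemma ofnat_nz:
  assumes "coprime n q"
  shows "of_nat n \<noteq> (0 :: 'a alg_closure)"
proof
  assume "of_nat n = (0 :: 'a alg_closure)"
  hence "p dvd n" using of_nat_eq_0_iff_char_dvd[where ?'a="'a alg_closure"] charK by simp
  moreover have "p dvd q" using k_pos q_def by (simp add: dvd_power)
  ultimately have "is_unit p" using assms coprime_common_divisor by blast
  thus False using p_prime by simp
qed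

lemma XK:
  assumes "0 < n" "coprime n q"
  shows "(monom 1 n - 1 :: 'a alg_closure poly) = Lin (mu n)"
  by (rule xN_Lin[OF assms(1) ofnat_nz[OF assms(2)]])

lemma mK_dvd_mono: "f dvd g \<Longrightarrow> mK f dvd mK g"
  by (elim dvdE) (simp add: mK_mult)

context
  fixes n :: nat
  assumes n_pos: "0 < n" and n_cop: "coprime n q"
begin

lemma dv_mK: "f dvd monom 1 n - 1 \<Longrightarrow> mK f dvd monom 1 n - 1"
  using mK_dvd_mono[of f "monom 1 n - 1"] mK_xN by simp

lemma dv_Zr: "f dvd monom 1 n - 1 \<Longrightarrow> Zr f \<subseteq> mu n"
proof
  fix z assume f: "f dvd monom 1 n - 1" and z: "z \<in> Zr f"
  obtain g where "(monom 1 n - 1 :: 'a alg_closure poly) = mK f * g" using dv_mK[OF f] by (elim dvdE)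
  hence "poly (monom 1 n - 1 :: 'a alg_closure poly) z = 0" using z by (simp add: Zr_def)
  thus "z \<in> mu n" by (simp add: poly_monom mu_def)
qed

lemma dv_fin: "f dvd monom 1 n - 1 \<Longrightarrow> finite (Zr f)"
  using dv_Zr finite_mu[OF n_pos] finite_subset by blast

lemma dv_nz:
  assumes "(f :: 'a poly) dvd monom 1 n - 1" shows "f \<noteq> 0"
proof
  assume "f = 0"
  hence "(monom 1 n - 1 :: 'a poly) = 0" using assms by (simp only: dvd_0_left_iff)
  thus False using xN_nz[OF n_pos] by blast
qed

lemma dv_order: "f dvd monom 1 n - 1 \<Longrightarrow> order z (mK f) \<le> 1"
  using dvd_imp_order_le[OF xN_nz[OF n_pos] dv_mK, of f z] xN_order[OF n_pos ofnat_nz[OF n_cop], of z]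
  by simp

lemma dv_Lin:
  assumes "f dvd monom 1 n - 1" "lead_coeff f = 1"
  shows "mK f = Lin (Zr f)"
proof -
  have nz: "mK f \<noteq> 0" using dv_nz[OF assms(1)] mK_eq0 by simp
  have "mK f = smult (lead_coeff (mK f)) (Lin {z. poly (mK f) z = 0})"
    by (rule split_lemma[OF nz dv_order[OF assms(1)]])
  thus ?thesis using assms(2) by (simp add: lead_mK Zr_def)
qed

lemma Zr_orb_closed:
  assumes "z \<in> mu n" "good q z"
  shows "sig ` orb (q^2) z = orb (q^2) z"
proof -
  let ?O = "orb (q^2) z"
  have fin: "finite ?O" by (rule orb_finite[OF n_pos assms(1)])
  have nz: "0 \<notin> mu n" using n_pos by (simp add: mu_def power_0_left)
  have inj: "inj_on sig ?O"
  proof (rule inj_onI)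
    fix x y assume "x \<in> ?O" "y \<in> ?O" and e: "sig x = sig y"
    have "inverse x = inverse y" using e unfolding sig_def by (rule frobq_inj)
    thus "x = y" by simp
  qed
  have sub: "sig ` ?O \<subseteq> ?O"
  proof
    fix y assume "y \<in> sig ` ?O"
    then obtain w where w: "w \<in> ?O" "y = sig w" by auto
    obtain i where wi: "w = z ^ ((q^2) ^ i)" using w(1) unfolding orb_def by auto
    have "y = (sig z) ^ ((q^2) ^ i)" unfolding w(2) wi sig_def
      by (simp add: power_inverse power_mult[symmetric] mult.commute)
    hence "y \<in> orb (q^2) (sig z)" unfolding orb_def by auto
    also have "orb (q^2) (sig z) = ?O"
      by (rule orb_eq[OF n_pos assms(1)]) (use assms(2) good_sig in simp)
    finally show "y \<in> ?O" .
  qed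
  have "card (sig ` ?O) = card ?O" by (rule card_image[OF inj])
  thus ?thesis using card_subset_eq[OF fin sub] by simp
qed

lemma Omega_to_orb:
  assumes "f \<in> Omega q n"
  shows "\<exists>z \<in> mu n. good q z \<and> Zr f = orb (q^2) z"
proof -
  have lc: "lead_coeff f = 1" and irr: "irreducible f" and c0: "coeff f 0 \<noteq> 0"
    and dg: "f = dagger_poly q f" and dv: "f dvd monom 1 n - 1"
    using assms by (auto simp: Omega_def SCRIM_def)
  have fnz: "f \<noteq> 0" by (rule dv_nz[OF dv])
  have fL: "mK f = Lin (Zr f)" by (rule dv_Lin[OF dv lc])
  have fin: "finite (Zr f)" by (rule dv_fin[OF dv])
  have "\<not> is_unit f" using irr by (rule irreducible_not_unit)
  hence "degree f \<noteq> 0" using is_unit_iff_degree[OF fnz] by simp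
  then obtain z where z: "poly (mK f) z = 0"
    using alg_closed_imp_poly_has_root[of "mK f"] by (auto simp: degree_mK)
  have zmu: "z \<in> mu n" using z dv_Zr[OF dv] by (auto simp: Zr_def)
  let ?O = "orb (q^2) z"
  have Osub: "?O \<subseteq> Zr f" by (rule orb_roots[OF z])
  have Ofin: "finite ?O" by (rule orb_finite[OF n_pos zmu])
  obtain h where h: "mK h = Lin ?O" using descend_Lin[OF Ofin orb_closed] by blast
  have "Lin ?O dvd Lin (Zr f)" by (rule Lin_subset_dvd[OF fin Osub])
  hence "h dvd f" using h fL by (intro mK_dvd) simp
  then obtain g where g: "f = h * g" by (elim dvdE)
  have "\<not> is_unit h"
  proof
    assume "is_unit h"
    hence "poly (mK h) z \<noteq> 0" by (rule unit_no_root)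
    thus False using h Lin_root_iff[OF Ofin] orb_self by auto
  qed
  hence "is_unit g" using Factorial_Ring.irreducibleD[OF irr g] by blast
  hence gnr: "poly (mK g) x \<noteq> 0" for x by (rule unit_no_root)
  have "Zr f = Zr h" unfolding Zr_def g mK_mult using gnr by auto
  also have "\<dots> = ?O" unfolding Zr_def h using Lin_roots[OF Ofin] by simp
  finally have ZO: "Zr f = ?O" .
  have nz0: "0 \<notin> Zr f" using dv_Zr[OF dv] n_pos by (auto simp: mu_def power_0_left)
  have "mK f = mK (dagger_poly q f)" using dg by simp
  also have "\<dots> = Lin (sig ` Zr f)" unfolding dagger_mK fL by (rule dagger_Lin[OF fin nz0])
  finally have "Lin (Zr f) = Lin (sig ` Zr f)" using fL by simp
  hence "Zr f = sig ` Zr f" using Lin_roots[OF fin] Lin_roots[OF finite_imageI[OF fin]] by metis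
  hence "sig z \<in> ?O" using ZO orb_self[of z "q^2"] by auto
  hence "good q z" by (simp add: good_sig)
  thus ?thesis using zmu ZO by blast
qed

lemma orb_to_Omega:
  assumes zmu: "z \<in> mu n" and gz: "good q z"
  shows "\<exists>f \<in> Omega q n. Zr f = orb (q^2) z"
proof -
  let ?O = "orb (q^2) z"
  have Ofin: "finite ?O" by (rule orb_finite[OF n_pos zmu])
  have Omu: "?O \<subseteq> mu n" by (rule orb_mu[OF zmu])
  obtain h where h: "mK h = Lin ?O" using descend_Lin[OF Ofin orb_closed] by blast
  have lc: "lead_coeff h = 1"
  proof -
    have "to_ac (lead_coeff h) = 1" using h Lin_monic by (metis lead_mK)
    thus ?thesis by (metis to_ac_1 to_ac_eq_iff)
  qed
  have "mK h dvd mK (monom 1 n - 1)"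
    unfolding h mK_xN XK[OF n_pos n_cop] by (rule Lin_subset_dvd[OF finite_mu[OF n_pos] Omu])
  hence dv: "h dvd monom 1 n - 1" by (rule mK_dvd)
  have nz0: "0 \<notin> ?O" using Omu n_pos by (auto simp: mu_def power_0_left)
  have c0: "coeff h 0 \<noteq> 0"
  proof
    assume "coeff h 0 = 0"
    hence "coeff (mK h) 0 = 0" by (simp add: coeff_mK)
    hence "poly (Lin ?O) 0 = 0" using h by (simp add: poly_0_coeff_0)
    thus False using Lin_root_iff[OF Ofin] nz0 by simp
  qed
  have ZO: "Zr h = ?O" unfolding Zr_def h using Lin_roots[OF Ofin] by simp
  have hnz: "h \<noteq> 0" by (rule dv_nz[OF dv])
  have irr: "irreducible h"
  proof (rule Factorial_Ring.irreducibleI)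
    show "h \<noteq> 0" by (rule hnz)
    show "\<not> is_unit h"
    proof
      assume "is_unit h"
      hence "poly (mK h) z \<noteq> 0" by (rule unit_no_root)
      thus False using ZO orb_self[of z "q^2"] by (auto simp: Zr_def)
    qed
    fix a b assume hab: "h = a * b"
    show "is_unit a \<or> is_unit b"
    proof (rule ccontr)
      assume nu: "\<not> (is_unit a \<or> is_unit b)"
      have anz: "a \<noteq> 0" and bnz: "b \<noteq> 0" using hab hnz by auto
      have zin: "poly (mK c) z = 0" if c: "c = a \<or> c = b" and cnz: "c \<noteq> 0" and cnu: "\<not> is_unit c" for c
      proof -
        have "degree c \<noteq> 0" using is_unit_iff_degree[OF cnz] cnu by simp
        then obtain w where w: "poly (mK c) w = 0"
          using alg_closed_imp_poly_has_root[of "mK c"] by (auto simp: degree_mK)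
        have "poly (mK h) w = 0" using c w hab by (auto simp: mK_mult)
        hence "w \<in> ?O" using ZO by (auto simp: Zr_def)
        hence "orb (q^2) w = ?O" by (rule orb_eq[OF n_pos zmu])
        hence "z \<in> Zr c" using orb_roots[OF w] orb_self[of z "q^2"] by auto
        thus ?thesis by (simp add: Zr_def)
      qed
      have za: "poly (mK a) z = 0" using zin[of a] anz nu by auto
      have zb: "poly (mK b) z = 0" using zin[of b] bnz nu by auto
      have manz: "mK a \<noteq> 0" and mbnz: "mK b \<noteq> 0" using anz bnz mK_eq0 by auto
      have "order z (mK h) = order z (mK a) + order z (mK b)"
        unfolding hab mK_mult using manz mbnz by (simp add: order_mult)
      moreover have "order z (mK a) > 0" using za order_gt_0_iff[OF manz] by simp
      moreover have "order z (mK b) > 0" using zb order_gt_0_iff[OF mbnz] by simp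
      moreover have "order z (mK h) \<le> 1" by (rule dv_order[OF dv])
      ultimately show False by simp
    qed
  qed
  have "mK (dagger_poly q h) = Lin (sig ` ?O)" unfolding dagger_mK h by (rule dagger_Lin[OF Ofin nz0])
  also have "sig ` ?O = ?O" by (rule Zr_orb_closed[OF zmu gz])
  finally have "mK (dagger_poly q h) = mK h" using h by simp
  hence dg: "h = dagger_poly q h" using mK_inj by metis
  have "h \<in> Omega q n" using lc irr c0 dg dv by (simp add: Omega_def SCRIM_def)
  thus ?thesis using ZO by blast
qed

lemma Omega_inj:
  assumes "f \<in> Omega q n" "g \<in> Omega q n" "Zr f = Zr g"
  shows "f = g"
proof -
  have "mK f = Lin (Zr f)" using assms(1) by (intro dv_Lin) (auto simp: Omega_def SCRIM_def)
  moreover have "mK g = Lin (Zr g)" using assms(2) by (intro dv_Lin) (auto simp: Omega_def SCRIM_def)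
  ultimately show ?thesis using assms(3) mK_inj by metis
qed

lemma card_Omega_orbits:
  "card (Omega q n :: 'a poly set) = card {orb (q^2) z | z :: 'a alg_closure. z \<in> mu n \<and> good q z}"
proof (rule bij_betw_same_card[of Zr])
  show "bij_betw Zr (Omega q n) {orb (q^2) z | z :: 'a alg_closure. z \<in> mu n \<and> good q z}"
    unfolding bij_betw_def
  proof
    show "inj_on Zr (Omega q n)" by (intro inj_onI Omega_inj)
    show "Zr ` Omega q n = {orb (q^2) z | z :: 'a alg_closure. z \<in> mu n \<and> good q z}"
    proof
      show "Zr ` Omega q n \<subseteq> {orb (q^2) z | z :: 'a alg_closure. z \<in> mu n \<and> good q z}"
        using Omega_to_orb by fastforce
      show "{orb (q^2) z | z :: 'a alg_closure. z \<in> mu n \<and> good q z} \<subseteq> Zr ` Omega q n"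
        using orb_to_Omega by fastforce
    qed
  qed
qed

end

end



lemma pow_gcd_one:
  fixes c :: "'b::field"
  assumes "c ^ a = 1" "c ^ b = 1"
  shows "c ^ gcd a b = 1"
proof (cases "a = 0")
  case True
  then show ?thesis using assms by simp
next
  case False
  obtain x y where xy: "a * x = b * y + gcd a b" using bezout_nat[OF False] by blast
  have "c ^ (a * x) = 1" using assms(1) by (simp add: power_mult)
  moreover have "c ^ (b * y + gcd a b) = c ^ gcd a b" using assms(2) by (simp add: power_add power_mult)
  ultimately show ?thesis using xy by simp
qed

lemma pow_coprime_one:
  fixes c :: "'b::field"
  assumes "c ^ a = 1" "c ^ b = 1" "coprime a b"
  shows "c = 1"
  using pow_gcd_one[OF assms(1,2)] assms(3) by simp

lemma pow_dvd_one:
  fixes c :: "'b::field"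
  assumes "c ^ a = 1" "a dvd b"
  shows "c ^ b = 1"
  using assms by (auto elim!: dvdE simp: power_mult)

lemma pow_pow_one:
  fixes x :: "'b::comm_monoid_mult"
  assumes "x ^ a = 1" shows "(x ^ b) ^ a = 1"
proof -
  have "(x ^ b) ^ a = (x ^ a) ^ b" by (simp add: power_mult[symmetric] mult.commute)
  thus ?thesis using assms by simp
qed

lemma sig_one_aux:
  fixes x :: "'b::field"
  assumes "x ^ a = 1" shows "(inverse x ^ b) ^ a = 1"
  using pow_pow_one[of "inverse x" a b] assms by (simp add: power_inverse)

lemma root_decomp:
  fixes z :: "'b::field"
  assumes z: "z ^ (A * B) = 1" and cop: "coprime A B" and A: "A > 0" and B: "B > 0"
  shows "\<exists>u v. u ^ A = 1 \<and> v ^ B = 1 \<and> z = u * v"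
proof -
  obtain x y where xy: "A * x = B * y + gcd A B" using bezout_nat[of A B] A by auto
  hence xy: "A * x = B * y + 1" using cop by simp
  have znz: "z \<noteq> 0" using z A B by (auto simp: power_0_left)
  define v where "v = z ^ (A * x)"
  define u where "u = inverse (z ^ (B * y))"
  have "v ^ B = (z ^ (A * B)) ^ x" unfolding v_def by (simp add: power_mult[symmetric] mult_ac)
  hence v1: "v ^ B = 1" using z by simp
  have "u ^ A = inverse ((z ^ (A * B)) ^ y)" unfolding u_def by (simp add: power_inverse power_mult[symmetric] mult_ac)
  hence u1: "u ^ A = 1" using z by simp
  have "v = z ^ (B * y) * z" unfolding v_def xy by simp
  hence "z = u * v" unfolding u_def using znz by (simp add: field_simps)
  thus ?thesis using u1 v1 by blast
qed

lemma two_adic_bound: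
  fixes q r i :: nat
  assumes "2 ^ r dvd q + 1" "\<not> 2 ^ (r + 1) dvd q + 1" and qodd: "odd q"
  shows "\<not> 2 ^ (r + 1) dvd (q ^ 2) ^ i + q"
proof
  assume H: "2 ^ (r + 1) dvd (q ^ 2) ^ i + q"
  let ?M = "2 ^ (r + 1) :: nat"
  have q1: "q \<ge> 1" using qodd by (cases q) auto
  have "q ^ 2 = (q - 1) * (q + 1) + 1" using q1
    by (simp add: power2_eq_square algebra_simps)
  moreover have "?M dvd (q - 1) * (q + 1)"
  proof -
    have "2 dvd q - 1" using qodd q1 by (simp add: even_diff_nat)
    hence "2 * 2 ^ r dvd (q - 1) * (q + 1)" using assms(1) by (rule mult_dvd_mono)
    thus ?thesis by simp
  qed
  ultimately have "[q ^ 2 = 1] (mod ?M)"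
    by (metis cong_add_rcancel_0_nat cong_def dvd_eq_mod_eq_0 mod_0 cong_sym)
  hence "[(q ^ 2) ^ i = 1] (mod ?M)" using cong_pow by fastforce
  hence "[(q ^ 2) ^ i + q = 1 + q] (mod ?M)" by (rule cong_add) simp
  moreover have "[(q ^ 2) ^ i + q = 0] (mod ?M)" using H by (simp add: cong_0_iff)
  ultimately have "[1 + q = 0] (mod ?M)" by (metis cong_sym cong_trans)
  hence "?M dvd q + 1" by (simp add: cong_0_iff add.commute)
  thus False using assms(2) by simp
qed

context ffq
begin

definition Tset :: "nat \<Rightarrow> 'a alg_closure set set" where
  "Tset N = {orb (q^2) z | z. z \<in> mu N \<and> good q z}"

lemma sig_mult: "sig (x * y) = sig x * sig y"
  unfolding sig_def by (simp add: power_mult_distrib)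

context
  fixes r m n' :: nat
  assumes r1: "2 ^ r dvd q + 1" and r2: "\<not> 2 ^ (r + 1) dvd q + 1" and n'_odd: "odd n'"
begin

abbreviation s where "s \<equiv> min m r"

lemma u_props:
  assumes u: "u \<in> (mu (2 ^ s) :: 'a alg_closure set)"
  shows "u \<noteq> 0" "u ^ q = inverse u" "u ^ (q^2) = u" "u ^ ((q^2) ^ i) = u" "sig u = u"
proof -
  have u1: "u ^ (2 ^ s) = 1" using u by (simp add: mu_def)
  show unz: "u \<noteq> 0" using u1 by (auto simp: power_0_left)
  have "2 ^ s dvd (2::nat) ^ r" by (simp add: le_imp_power_dvd)
  hence "2 ^ s dvd q + 1" using r1 dvd_trans by blast
  hence "u ^ (q + 1) = 1" by (rule pow_dvd_one[OF u1])
  hence "u * u ^ q = 1" by simp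
  thus uq: "u ^ q = inverse u" using unz by (simp add: field_simps)
  show uQ: "u ^ (q^2) = u" using uq by (simp add: power2_eq_square power_mult power_inverse)
  show "u ^ ((q^2) ^ i) = u"
  proof (induction i)
    case (Suc i)
    have "u ^ ((q^2) ^ Suc i) = (u ^ ((q^2) ^ i)) ^ (q^2)" by (simp add: power_mult[symmetric] mult.commute)
    then show ?case using Suc uQ by simp
  qed simp
  show "sig u = u" unfolding sig_def using uq unz by (simp add: power_inverse)
qed

lemma orb_mult:
  assumes u: "u \<in> (mu (2 ^ s) :: 'a alg_closure set)"
  shows "orb (q^2) (u * v) = (\<lambda>w. u * w) ` orb (q^2) v"
  unfolding orb_def using u_props(4)[OF u] by (auto simp: power_mult_distrib)

lemma good_mult:
  assumes u: "u \<in> (mu (2 ^ s) :: 'a alg_closure set)"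
  shows "good q (u * v) \<longleftrightarrow> good q v"
proof -
  have unz: "u \<noteq> 0" by (rule u_props(1)[OF u])
  have "good q (u * v) \<longleftrightarrow> u * sig v \<in> (\<lambda>w. u * w) ` orb (q^2) v"
    unfolding good_sig orb_mult[OF u] sig_mult u_props(5)[OF u] ..
  also have "\<dots> \<longleftrightarrow> sig v \<in> orb (q^2) v" using unz by auto
  finally show ?thesis by (simp add: good_sig)
qed

lemma mu_mult:
  assumes u: "u \<in> (mu (2 ^ s) :: 'a alg_closure set)" and v: "v \<in> mu n'"
  shows "u * v \<in> mu (2 ^ m * n')"
proof -
  have "2 ^ s dvd (2::nat) ^ m * n'" by (simp add: le_imp_power_dvd)
  hence "u ^ (2 ^ m * n') = 1" using u pow_dvd_one by (auto simp: mu_def)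
  moreover have "v ^ (2 ^ m * n') = 1" using v pow_dvd_one[of v n'] by (auto simp: mu_def)
  ultimately show ?thesis by (simp add: mu_def power_mult_distrib)
qed

lemma Tset_decomp:
  "Tset (2 ^ m * n') = (\<lambda>(u, Y). (\<lambda>w. u * w) ` Y) ` (mu (2 ^ s) \<times> Tset n')"
proof
  show "(\<lambda>(u, Y). (\<lambda>w. u * w) ` Y) ` (mu (2 ^ s) \<times> Tset n') \<subseteq> Tset (2 ^ m * n')"
  proof
    fix Xs assume "Xs \<in> (\<lambda>(u, Y). (\<lambda>w. u * w) ` Y) ` (mu (2 ^ s) \<times> Tset n')"
    then obtain u v where u: "u \<in> mu (2 ^ s)" and v: "v \<in> mu n'" "good q v"
      and Xs: "Xs = (\<lambda>w. u * w) ` orb (q^2) v" unfolding Tset_def by auto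
    have "Xs = orb (q^2) (u * v)" using orb_mult[OF u] Xs by simp
    moreover have "u * v \<in> mu (2 ^ m * n')" by (rule mu_mult[OF u v(1)])
    moreover have "good q (u * v)" using good_mult[OF u] v(2) by simp
    ultimately show "Xs \<in> Tset (2 ^ m * n')" unfolding Tset_def by blast
  qed
  show "Tset (2 ^ m * n') \<subseteq> (\<lambda>(u, Y). (\<lambda>w. u * w) ` Y) ` (mu (2 ^ s) \<times> Tset n')"
  proof
    fix Xs assume "Xs \<in> Tset (2 ^ m * n')"
    then obtain z where z: "z \<in> mu (2 ^ m * n')" "good q z" and Xs: "Xs = orb (q^2) z"
      unfolding Tset_def by auto
    have cop: "coprime ((2::nat) ^ m) n'" using n'_odd by simp
    obtain u v where uv: "u ^ (2 ^ m) = 1" "v ^ n' = 1" "z = u * v"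
    proof -
      have n'pos: "0 < n'" using n'_odd by (cases n') auto
      have "z ^ (2 ^ m * n') = 1" using z(1) by (simp add: mu_def)
      from root_decomp[OF this cop _ n'pos] show ?thesis using that by auto
    qed
    have n'nz: "n' \<noteq> 0" using n'_odd by (cases n') auto
    have unz: "u \<noteq> 0"
    proof
      assume "u = 0" thus False using uv(1) by (simp add: power_0_left)
    qed
    have vnz: "v \<noteq> 0"
    proof
      assume "v = 0" thus False using uv(2) n'nz by (simp add: power_0_left)
    qed
    obtain i where i: "sig z = z ^ ((q^2) ^ i)" using z(2) unfolding good_sig orb_def by auto
    define c where "c = sig u * inverse (u ^ ((q^2) ^ i))"
    have c2: "c = v ^ ((q^2) ^ i) * inverse (sig v)"
    proof -
      have "sig u * sig v = u ^ ((q^2) ^ i) * v ^ ((q^2) ^ i)"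
        using i uv(3) by (simp add: sig_mult power_mult_distrib)
      moreover have "sig v \<noteq> 0" using vnz by (simp add: sig_def)
      ultimately show ?thesis unfolding c_def using unz by (simp add: field_simps)
    qed
    have "c ^ (2 ^ m) = 1"
    proof -
      have "(sig u) ^ (2 ^ m) = 1" unfolding sig_def
        by (rule sig_one_aux[OF uv(1)])
      moreover have "(u ^ ((q^2) ^ i)) ^ (2 ^ m) = 1"
        by (rule pow_pow_one[OF uv(1)])
      ultimately show ?thesis unfolding c_def by (simp add: power_mult_distrib power_inverse)
    qed
    moreover have "c ^ n' = 1"
    proof -
      have "(sig v) ^ n' = 1" unfolding sig_def
        by (rule sig_one_aux[OF uv(2)])
      moreover have "(v ^ ((q^2) ^ i)) ^ n' = 1"
        by (rule pow_pow_one[OF uv(2)])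
      ultimately show ?thesis unfolding c2 by (simp add: power_mult_distrib power_inverse)
    qed
    ultimately have c1: "c = 1" by (rule pow_coprime_one[OF _ _ cop])
    hence su: "sig u = u ^ ((q^2) ^ i)" unfolding c_def using unz by (simp add: field_simps)
    have sv: "sig v = v ^ ((q^2) ^ i)" using c1 c2 vnz by (simp add: field_simps sig_def)
    have "u ^ ((q^2) ^ i + q) = 1"
      using su unz by (simp add: sig_def power_add power_inverse field_simps)
    hence g: "u ^ gcd ((q^2) ^ i + q) (2 ^ m) = 1" using pow_gcd_one uv(1) by blast
    have "gcd ((q^2) ^ i + q) (2 ^ m) dvd 2 ^ m" by simp
    then obtain j where j: "j \<le> m" "gcd ((q^2) ^ i + q) (2 ^ m) = 2 ^ j"
      using divides_primepow_nat[of "2::nat" _ m] by auto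
    have "j \<le> r"
    proof (rule ccontr)
      assume "\<not> j \<le> r"
      hence "r + 1 \<le> j" by simp
      hence "(2::nat) ^ (r + 1) dvd 2 ^ j" by (rule le_imp_power_dvd)
      also have "\<dots> dvd (q^2) ^ i + q" using j(2) by (metis gcd_dvd1)
      finally show False using two_adic_bound[OF r1 r2 q_odd] by blast
    qed
    hence "(2::nat) ^ j dvd 2 ^ s" using j(1) by (simp add: le_imp_power_dvd)
    hence "u ^ (2 ^ s) = 1" using g j(2) pow_dvd_one by metis
    hence u': "u \<in> mu (2 ^ s)" by (simp add: mu_def)
    have "good q v" using good_mult[OF u'] z(2) uv(3) by simp
    hence "orb (q^2) v \<in> Tset n'" using uv(2) unfolding Tset_def mu_def by blast
    moreover have "Xs = (\<lambda>w. u * w) ` orb (q^2) v" using Xs uv(3) orb_mult[OF u'] by simp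
    ultimately show "Xs \<in> (\<lambda>(u, Y). (\<lambda>w. u * w) ` Y) ` (mu (2 ^ s) \<times> Tset n')"
      using u' by force
  qed
qed

lemma Tset_inj:
  "inj_on (\<lambda>(u, Y). (\<lambda>w. u * w) ` Y) (mu (2 ^ s) \<times> Tset n')"
proof (rule inj_onI, clarify)
  fix u Y u' Y'
  assume u: "u \<in> mu (2 ^ s)" and Y: "Y \<in> Tset n'" and u': "u' \<in> mu (2 ^ s)" and Y': "Y' \<in> Tset n'"
    and e: "(\<lambda>w. u * w) ` Y = (\<lambda>w. u' * w) ` Y'"
  obtain v where v: "v \<in> mu n'" "Y = orb (q^2) v" using Y unfolding Tset_def by auto
  obtain v' where v': "v' \<in> mu n'" "Y' = orb (q^2) v'" using Y' unfolding Tset_def by auto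
  have "u * v \<in> (\<lambda>w. u' * w) ` Y'" using e v(2) orb_self[of v] by blast
  then obtain w where w: "w \<in> Y'" "u * v = u' * w" by auto
  have wmu: "w \<in> mu n'" using w(1) v' orb_mu by blast
  have unz: "u \<noteq> 0" and u'nz: "u' \<noteq> 0" using u_props(1) u u' by auto
  have n'nz: "n' \<noteq> 0" using n'_odd by (cases n') auto
  have vnz: "v \<noteq> 0"
  proof
    assume "v = 0" thus False using v(1) n'nz by (simp add: mu_def power_0_left)
  qed
  define c where "c = u * inverse u'"
  have c2: "c = w * inverse v" unfolding c_def using w(2) unz u'nz vnz by (simp add: field_simps)
  have "c ^ (2 ^ s) = 1" unfolding c_def using u u' by (simp add: mu_def power_mult_distrib power_inverse)
  moreover have "c ^ n' = 1" unfolding c2 using v(1) wmu by (simp add: mu_def power_mult_distrib power_inverse)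
  moreover have "coprime ((2::nat) ^ s) n'" using n'_odd by simp
  ultimately have "c = 1" by (rule pow_coprime_one)
  hence uu: "u = u'" unfolding c_def using u'nz by (simp add: field_simps)
  have "inj (\<lambda>w. u * w)" using unz by (auto intro: injI)
  hence "Y = Y'" using e uu by (simp add: inj_image_eq_iff)
  thus "u = u' \<and> Y = Y'" using uu by simp
qed

lemma card_Tset:
  "card (Tset (2 ^ m * n')) = 2 ^ s * card (Tset n')"
proof -
  have "card (Tset (2 ^ m * n')) = card ((mu (2 ^ s) :: 'a alg_closure set) \<times> Tset n')"
    unfolding Tset_decomp by (rule card_image[OF Tset_inj])
  also have "\<dots> = card (mu (2 ^ s) :: 'a alg_closure set) * card (Tset n')" by (rule card_cartesian_product)
  also have "card (mu (2 ^ s) :: 'a alg_closure set) = 2 ^ s"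
  proof (rule card_mu)
    show "0 < (2::nat) ^ s" by simp
    show "of_nat (2 ^ s) \<noteq> (0 :: 'a alg_closure)" by (rule ofnat_nz) (use q_odd in simp)
  qed
  finally show ?thesis .
qed

end

end



lemma (in ffq) Tset_one:
  shows "Tset 1 = {{1 :: 'a alg_closure}}"
proof -
  have mu1: "(mu 1 :: 'a alg_closure set) = {1}" by (simp add: mu_def)
  have o1: "orb (q^2) (1 :: 'a alg_closure) = {1}" by (auto simp: orb_def)
  have g1: "good q (1 :: 'a alg_closure)" by (simp add: good_def o1)
  show ?thesis unfolding Tset_def mu1 using o1 g1 by auto
qed

theorem theorem2p8:
  fixes q n m n' r :: nat
  assumes field_card: "card (UNIV :: 'a set) = q ^ 2"
    and q_pp: "\<exists>p k. prime p \<and> 0 < k \<and> q = p ^ k"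
    and n_pos: "0 < n"
    and cop: "coprime n q"
    and n_decomp: "n = 2 ^ m * n'"
    and n'_odd: "odd n'"
    and r_pos: "0 < r"
    and r_exact: "2 ^ r dvd (q + 1) \<and> \<not> 2 ^ (r + 1) dvd (q + 1)"
  shows "card (Omega q n :: 'a::{finite,field} poly set) =
           (if m \<le> r then 2 ^ m * card (Omega q n' :: 'a poly set)
            else 2 ^ r * card (Omega q n' :: 'a poly set))
         \<and> card (Omega q 1 :: 'a poly set) = 1
         \<and> (\<forall>k. card (Omega q (2 ^ k) :: 'a poly set) = (if k \<le> r then 2 ^ k else 2 ^ r))"
proof -
  obtain p k0 where pk: "prime p" "0 < k0" "q = p ^ k0" using q_pp by blast
  have r1: "2 ^ r dvd q + 1" and r2: "\<not> 2 ^ (r + 1) dvd q + 1" using r_exact by auto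
  have "(2::nat) dvd 2 ^ r" using r_pos by simp
  hence "2 dvd q + 1" using r1 dvd_trans by blast
  hence qodd: "odd q" by simp
  interpret F: ffq q p k0 "TYPE('a)"
    by unfold_locales (use field_card pk qodd in auto)
  have Tdef: "card (Omega q N :: 'a poly set) = card (F.Tset N)" if "0 < N" "coprime N q" for N
    unfolding F.Tset_def using F.card_Omega_orbits[OF that] .
  have n'pos: "0 < n'" using n'_odd by (cases n') auto
  have cop': "coprime n' q" using cop n_decomp by simp
  have cop2: "coprime ((2::nat) ^ k) q" for k using qodd by simp
  have T1: "card (F.Tset 1) = 1" using F.Tset_one by simp
  have part1: "card (Omega q n :: 'a poly set) = 2 ^ (min m r) * card (Omega q n' :: 'a poly set)"
    using Tdef[OF n_pos cop] Tdef[OF n'pos cop'] F.card_Tset[OF r1 r2 n'_odd, of m] n_decomp by simp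
  have part2: "card (Omega q 1 :: 'a poly set) = 1" using Tdef[of 1] T1 by simp
  have part3: "card (Omega q (2 ^ k) :: 'a poly set) = (if k \<le> r then 2 ^ k else 2 ^ r)" for k
  proof -
    have "card (Omega q (2 ^ k) :: 'a poly set) = card (F.Tset (2 ^ k * 1))" using Tdef[OF _ cop2] by simp
    also have "\<dots> = 2 ^ (min k r) * card (F.Tset 1)" by (rule F.card_Tset[OF r1 r2]) simp
    finally show ?thesis using T1 by (simp add: min_def)
  qed
  show ?thesis using part1 part2 part3 by (simp add: min_def)
qed


end
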